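(* There is a constant $C>0$ such that the following holds. For a positive integer $l$, set $\epsilon=2^{-2l}$, $N=\lceil 5.34\ln(4l\cdot 2^{2l})\rceil$, and $n=2N(2^l-1)$ (the total number of uses of $U_\theta$). For every $\theta\in[0,1)$, let $\hat\theta$ be the estimate produced by the following procedure: for $k=1,\dots,l$ let $N_{x,k}\sim\mathrm{Bin}\big(N,(1+\cos(2\pi 2^{k-1}\theta))/2\big)$, $N_{y,k}\sim\mathrm{Bin}\big(N,(1+\sin(2\pi 2^{k-1}\theta))/2\big)$, all independent; $t_k=\frac{1}{2\pi}\big(\mathrm{atan2}(2N_{y,k}/N-1,2N_{x,k}/N-1)\big)_{\mathrm{mod}\,2\pi}$, $x(k)=(t_k-1/6)_{\mathrm{mod}\,1}$; $z(1)=x(1)$ and for $k=1,\dots,l-1$, with $d_k=(x(k+1)-2z(k))_{\mathrm{mod}\,1}$: $z(k+1)=2z(k)+d_k$ if $d_k\in[0,1/3)$, $2z(k)+1/3$ if $d_k\in[1/3,2/3)$, $2z(k)$ if $d_k\in[2/3,1)$; finally $\hat\theta=\big((z(l)+1/6)/2^{l-1}\big)_{\mathrm{mod}\,1}$. Then $$1-\mathbb{E}\big[F(U_{\hat\theta},U_\theta)\big]\le C\Big(\frac{\ln n}{n}\Big)^2 .$$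
   Context: $U_\theta=\mathrm{diag}(1,e^{i2\pi\theta})$ for $\theta\in[0,1)$, and the fidelity is $F(U_{\hat\theta},U_\theta)=|\mathrm{tr}(U_{\hat\theta}^{-1}U_\theta)|^2/4$. The binomial counts model, at stage $k$, $N$ measurements each with the POVMs $\{|\psi_x\rangle\langle\psi_x|,\mathbb{I}-|\psi_x\rangle\langle\psi_x|\}$ and $\{|\psi_y\rangle\langle\psi_y|,\mathbb{I}-|\psi_y\rangle\langle\psi_y|\}$ ($|\psi_x\rangle=(|0\rangle+|1\rangle)/\sqrt2$, $|\psi_y\rangle=(|0\rangle+i|1\rangle)/\sqrt2$) of $U_\theta^{2^{k-1}}|\psi_x\rangle$. $(a)_{\mathrm{mod}\,c}$ is the representative of $a$ in $[0,c)$; $\mathrm{atan2}$ is the polar angle (any fixed convention at $(0,0)$). The expectation is over the measurement outcomes; $C$ does not depend on $\theta$ or $l$. *)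

theory Defs
  imports "HOL-Analysis.Analysis" "HOL-Probability.Probability"
begin

definition rmod :: "real \<Rightarrow> real \<Rightarrow> real" where
  "rmod a c = a - c * of_int \<lfloor>a / c\<rfloor>"

text \<open>Polar angle of the point (x,y); angle in [0,2pi); convention at (0,0): 0.\<close>
definition atan2 :: "real \<Rightarrow> real \<Rightarrow> real" where
  "atan2 y x = Arg2pi (Complex x y)"

definition Umat :: "real \<Rightarrow> complex^2^2" where
  "Umat \<theta> = (\<chi> i j. if i = j then (if i = 0 then 1 else cis (2 * pi * \<theta>)) else 0)"

definition fidelity :: "complex^2^2 \<Rightarrow> complex^2^2 \<Rightarrow> real" where
  "fidelity V W = (cmod (trace (matrix_inv V ** W)))\<^sup>2 / 4"

definition Nmeas :: "nat \<Rightarrow> nat" where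
  "Nmeas l = nat \<lceil>(534 / 100) * ln (4 * real l * 2 ^ (2 * l))\<rceil>"

definition nuses :: "nat \<Rightarrow> nat" where
  "nuses l = 2 * Nmeas l * (2 ^ l - 1)"

definition tval :: "nat \<Rightarrow> nat \<Rightarrow> nat \<Rightarrow> real" where
  "tval N nx ny = rmod (atan2 (2 * real ny / real N - 1) (2 * real nx / real N - 1)) (2 * pi) / (2 * pi)"

text \<open>zrec x j = z(j+1).\<close>
fun zrec :: "(nat \<Rightarrow> real) \<Rightarrow> nat \<Rightarrow> real" where
  "zrec x 0 = x 1"
| "zrec x (Suc j) =
     (let d = rmod (x (j + 2) - 2 * zrec x j) 1 in
      if d < 1/3 then 2 * zrec x j + d
      else if d < 2/3 then 2 * zrec x j + 1/3
      else 2 * zrec x j)"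

definition theta_hat :: "nat \<Rightarrow> nat \<Rightarrow> (nat \<Rightarrow> nat) \<Rightarrow> (nat \<Rightarrow> nat) \<Rightarrow> real" where
  "theta_hat l N Nx Ny =
     (let x = (\<lambda>k. rmod (tval N (Nx k) (Ny k) - 1/6) 1)
      in rmod ((zrec x (l - 1) + 1/6) / 2 ^ (l - 1)) 1)"

definition counts_pmf :: "nat \<Rightarrow> nat \<Rightarrow> real \<Rightarrow> ((nat \<Rightarrow> nat) \<times> (nat \<Rightarrow> nat)) pmf" where
  "counts_pmf l N \<theta> =
     pair_pmf
       (Pi_pmf {1..l} 0 (\<lambda>k. binomial_pmf N ((1 + cos (2 * pi * 2 ^ (k - 1) * \<theta>)) / 2)))
       (Pi_pmf {1..l} 0 (\<lambda>k. binomial_pmf N ((1 + sin (2 * pi * 2 ^ (k - 1) * \<theta>)) / 2)))"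

end

theory Submission
  imports Defs
begin


lemma Umat_mult: "Umat a ** Umat b = Umat (a + b)"
  unfolding Umat_def
  by (simp add: matrix_matrix_mult_def vec_eq_iff sum_2 cis_mult[symmetric] algebra_simps
      ; metis exhaust_2 one_neq_zero)

lemma Umat_0: "Umat 0 = mat 1"
  unfolding Umat_def mat_def by (simp add: vec_eq_iff)

lemma matrix_inv_Umat: "matrix_inv (Umat a) = Umat (-a)"
proof -
  have ex: "Umat a ** Umat (-a) = mat 1 \<and> Umat (-a) ** Umat a = mat 1"
    by (simp add: Umat_mult Umat_0)
  define B where "B = matrix_inv (Umat a)"
  have B: "Umat a ** B = mat 1 \<and> B ** Umat a = mat 1"
    unfolding B_def matrix_inv_def by (rule someI, rule ex)
  have "B = B ** (Umat a ** Umat (-a))" using ex by (simp add: matrix_mul_rid)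
  also have "\<dots> = (B ** Umat a) ** Umat (-a)" by (simp add: matrix_mul_assoc)
  also have "\<dots> = Umat (-a)" using B by (simp add: matrix_mul_lid)
  finally show ?thesis unfolding B_def .
qed

lemma fidelity_Umat: "fidelity (Umat a) (Umat b) = (cos (pi * (b - a)))\<^sup>2"
proof -
  have tr: "trace (matrix_inv (Umat a) ** Umat b) = 1 + cis (2 * pi * (b - a))"
    unfolding matrix_inv_Umat Umat_mult trace_def by (simp add: sum_2 Umat_def mult.commute)
  have "(cmod (1 + cis x))\<^sup>2 = 2 + 2 * cos x" for x
  proof -
    have "(cmod (1 + cis x))\<^sup>2 = (1 + cos x)\<^sup>2 + (sin x)\<^sup>2"
      by (simp add: cmod_power2)
    also have "\<dots> = 2 + 2 * cos x" using sin_cos_squared_add[of x]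
      by (simp add: power2_eq_square algebra_simps)
    finally show ?thesis .
  qed
  moreover have "2 + 2 * cos (2 * pi * (b - a)) = 4 * (cos (pi * (b - a)))\<^sup>2"
    using cos_double_cos[of "pi * (b - a)"] by (simp add: algebra_simps)
  ultimately show ?thesis unfolding fidelity_def tr by simp
qed



lemma rmod1_shift:
  assumes "-1 \<le> v" "v < 1"
  shows "rmod (v + of_int i) 1 = (if v < 0 then v + 1 else v)"
proof -
  have "\<lfloor>v + of_int i\<rfloor> = \<lfloor>v\<rfloor> + i" by simp
  moreover have "\<lfloor>v\<rfloor> = (if v < 0 then -1 else 0)" using assms by (simp add: floor_eq_iff)
  ultimately show ?thesis unfolding rmod_def by auto
qed

lemma zrec_inv:
  fixes x :: "nat \<Rightarrow> real"
  assumes "\<And>k. 1 \<le> k \<Longrightarrow> k \<le> Suc j \<Longrightarrow> \<exists>e i. \<bar>e\<bar> < 1/6 \<and> x k = 2^(k-1)*\<theta> - 1/6 + e + of_int i"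
  shows "\<exists>\<epsilon> (m::int). \<bar>\<epsilon>\<bar> \<le> 1/6 \<and> zrec x j = 2^j*\<theta> - 1/6 + 2^j * of_int m + \<epsilon>"
  using assms
proof (induction j)
  case 0
  then obtain e i where "\<bar>e\<bar> < 1/6" "x 1 = \<theta> - 1/6 + e + of_int i" by fastforce
  then show ?case by (intro exI[of _ e] exI[of _ i]) auto
next
  case (Suc j)
  from Suc.IH Suc.prems obtain \<epsilon> m where em: "\<bar>\<epsilon>\<bar> \<le> 1/6" "zrec x j = 2^j*\<theta> - 1/6 + 2^j * of_int m + \<epsilon>"
    by fastforce
  from Suc.prems[of "Suc (Suc j)"] obtain e i where ei: "\<bar>e\<bar> < 1/6"
    "x (Suc (Suc j)) = 2^(Suc j)*\<theta> - 1/6 + e + of_int i" by auto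
  define v where "v = 1/6 + e - 2*\<epsilon>"
  have eqn: "x (j + 2) - 2 * zrec x j = v + of_int (i - 2 * 2^j * m)"
    using ei em by (simp add: v_def algebra_simps)
  have r: "rmod (v + of_int (i - 2 * 2^j * m)) 1 = (if v < 0 then v + 1 else v)"
    by (rule rmod1_shift) (use em ei in \<open>auto simp: v_def\<close>)
  have d: "rmod (x (j + 2) - 2 * zrec x j) 1 = (if v < 0 then v + 1 else v)"
    by (simp only: eqn r)
  have z2: "2 * zrec x j = 2^(Suc j)*\<theta> - 1/3 + 2^(Suc j) * of_int m + 2*\<epsilon>"
    using em by (simp add: algebra_simps)
  have zs: "zrec x (Suc j) = (if v < 0 then 2*zrec x j else if v < 1/3 then 2*zrec x j + v else 2*zrec x j + 1/3)"
    unfolding zrec.simps(2) Let_def d using em ei by (auto simp: v_def abs_le_iff abs_less_iff)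
  have b: "-1/6 < e" "e < 1/6" "-1/6 \<le> \<epsilon>" "\<epsilon> \<le> 1/6" using em(1) ei(1) by auto
  show ?case
  proof (cases "v < 0")
    case True
    have "\<bar>2*\<epsilon> - 1/6\<bar> \<le> 1/6" using b True unfolding v_def abs_le_iff by linarith
    moreover have "zrec x (Suc j) = 2^(Suc j)*\<theta> - 1/6 + 2^(Suc j) * of_int m + (2*\<epsilon> - 1/6)"
      using True unfolding zs z2 by simp
    ultimately show ?thesis by blast
  next
    case False
    show ?thesis
    proof (cases "v < 1/3")
      case True
      have "\<bar>e\<bar> \<le> 1/6" using b by simp
      moreover have "zrec x (Suc j) = 2^(Suc j)*\<theta> - 1/6 + 2^(Suc j) * of_int m + e"
        using True \<open>\<not> v < 0\<close> unfolding zs z2 by (simp add: v_def)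
      ultimately show ?thesis by blast
    next
      case False
      have "\<bar>2*\<epsilon> + 1/6\<bar> \<le> 1/6" using b False unfolding v_def abs_le_iff by linarith
      moreover have "zrec x (Suc j) = 2^(Suc j)*\<theta> - 1/6 + 2^(Suc j) * of_int m + (2*\<epsilon> + 1/6)"
        using False \<open>\<not> v < 0\<close> unfolding zs z2 by simp
      ultimately show ?thesis by blast
    qed
  qed
qed



lemma sin_sq_shift: "(sin (x + of_int K * pi))\<^sup>2 = (sin x)\<^sup>2"
proof -
  have s: "sin (of_int K * pi) = 0" using sin_zero_iff_int2 by blast
  have c: "(cos (of_int K * pi))\<^sup>2 = 1" using sin_cos_squared_add[of "of_int K * pi"] s by simp
  show ?thesis by (simp add: sin_add s power_mult_distrib c)
qed

lemma theta_hat_good: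
  assumes l: "l \<ge> 1"
    and good: "\<And>k. 1 \<le> k \<Longrightarrow> k \<le> l \<Longrightarrow> \<exists>e i. \<bar>e\<bar> < 1/6 \<and> tval N (Nx k) (Ny k) = 2^(k-1)*\<theta> + e + of_int i"
  shows "1 - fidelity (Umat (theta_hat l N Nx Ny)) (Umat \<theta>) \<le> pi\<^sup>2 / (9 * 4^l)"
proof -
  define x where "x = (\<lambda>k. rmod (tval N (Nx k) (Ny k) - 1/6) 1)"
  have xk: "\<exists>e i. \<bar>e\<bar> < 1/6 \<and> x k = 2^(k-1)*\<theta> - 1/6 + e + of_int i" if k1: "1 \<le> k" "k \<le> Suc (l - 1)" for k
  proof -
    obtain e i where ei: "\<bar>e\<bar> < 1/6" "tval N (Nx k) (Ny k) = 2^(k-1)*\<theta> + e + of_int i"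
      using good[of k] k1 l by auto
    have "x k = 2^(k-1)*\<theta> - 1/6 + e + of_int (i - \<lfloor>tval N (Nx k) (Ny k) - 1/6\<rfloor>)"
      unfolding x_def rmod_def using ei by simp
    thus ?thesis using ei by blast
  qed
  obtain \<epsilon> m where em: "\<bar>\<epsilon>\<bar> \<le> 1/6" "zrec x (l-1) = 2^(l-1)*\<theta> - 1/6 + 2^(l-1) * of_int m + \<epsilon>"
    using zrec_inv[of "l-1" x \<theta>, OF xk] by blast
  define q where "q = (zrec x (l - 1) + 1/6) / 2^(l-1)"
  have q: "q = \<theta> + of_int m + \<epsilon> / 2^(l-1)"
    unfolding q_def em(2) by (simp add: field_simps)
  have th: "theta_hat l N Nx Ny = q - of_int \<lfloor>q\<rfloor>"
    unfolding theta_hat_def Let_def q_def x_def by (simp add: rmod_def)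
  have "1 - fidelity (Umat (theta_hat l N Nx Ny)) (Umat \<theta>) = (sin (pi * (\<theta> - theta_hat l N Nx Ny)))\<^sup>2"
    unfolding fidelity_Umat using sin_cos_squared_add[of "pi * (\<theta> - theta_hat l N Nx Ny)"] by linarith
  also have "pi * (\<theta> - theta_hat l N Nx Ny) = - (pi * \<epsilon> / 2^(l-1)) + of_int (\<lfloor>q\<rfloor> - m) * pi"
    unfolding th q by (simp add: algebra_simps)
  also have "(sin (- (pi * \<epsilon> / 2^(l-1)) + of_int (\<lfloor>q\<rfloor> - m) * pi))\<^sup>2 = (sin (pi * \<epsilon> / 2^(l-1)))\<^sup>2"
    by (simp only: sin_sq_shift) simp
  also have "\<dots> \<le> (pi * \<epsilon> / 2^(l-1))\<^sup>2"
    using abs_sin_x_le_abs_x[of "pi * \<epsilon> / 2^(l-1)"] by (metis abs_ge_zero power2_abs power_mono)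
  also have "\<dots> = pi\<^sup>2 * \<epsilon>\<^sup>2 * 4 / 4^l"
  proof -
    have "(2::real)^(l-1) * 2 = 2^l" using l by (metis Suc_diff_1 less_le_trans zero_less_one power_Suc2 le_eq_less_or_eq not_less)
    hence "((2::real)^(l-1))\<^sup>2 * 4 = 4^l"
      by (metis power2_eq_square power_mult_distrib mult.commute power_mult semiring_norm(87) numeral_Bit0_eq_double power2_eq_square)
    thus ?thesis by (simp add: field_simps power_divide power_mult_distrib)
  qed
  also have "\<dots> \<le> pi\<^sup>2 * (1/36) * 4 / 4^l"
  proof -
    have "\<epsilon>\<^sup>2 \<le> (1/6)\<^sup>2" using em(1) by (metis abs_ge_zero power2_abs power_mono)
    hence "\<epsilon>\<^sup>2 \<le> 1/36" by (simp add: power_divide)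
    thus ?thesis by (intro divide_right_mono mult_right_mono mult_left_mono) auto
  qed
  also have "\<dots> = pi\<^sup>2 / (9 * 4^l)" by simp
  finally show ?thesis .
qed



lemma cos_gt_half:
  assumes "cos y > 1/2"
  shows "\<exists>i::int. \<bar>y - 2*pi * of_int i\<bar> < pi/3"
proof -
  define i where "i = \<lfloor>(y + pi)/(2*pi)\<rfloor>"
  define w where "w = y - 2*pi * of_int i"
  have "of_int i \<le> (y + pi)/(2*pi)" "(y + pi)/(2*pi) < of_int i + 1"
    unfolding i_def by linarith+
  hence w1: "-pi \<le> w" "w < pi" unfolding w_def using pi_gt_zero
    by (simp_all add: field_simps)
  have s: "sin (2*pi * of_int i) = 0" using sin_zero_iff_int2[of "2*pi * of_int i"]
    by (metis mult.assoc mult.commute of_int_mult of_int_numeral)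
  have cw: "cos w = cos y" unfolding w_def cos_diff using s by simp
  have "\<bar>w\<bar> < pi/3"
  proof (rule ccontr)
    assume "\<not> \<bar>w\<bar> < pi/3"
    hence h: "pi/3 \<le> \<bar>w\<bar>" by simp
    have "cos \<bar>w\<bar> \<le> cos (pi/3)"
      by (rule cos_monotone_0_pi_le) (use h w1 in auto)
    moreover have "cos \<bar>w\<bar> = cos w" by (simp add: abs_if)
    ultimately show False using cw assms cos_60 by simp
  qed
  thus ?thesis unfolding w_def by blast
qed

lemma Arg_close:
  fixes X Y phi :: real
  assumes "(X - cos phi)\<^sup>2 + (Y - sin phi)\<^sup>2 < 3/4"
  shows "\<exists>e i. \<bar>e\<bar> < 1/6 \<and> Arg2pi (Complex X Y) / (2*pi) = phi/(2*pi) + e + of_int i"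
proof -
  define c where "c = Complex X Y"
  define A where "A = Arg2pi c"
  define r where "r = cmod c"
  have rc: "r * cos A = X" "r * sin A = Y" unfolding r_def A_def c_def
    using cos_Arg2pi[of "Complex X Y"] sin_Arg2pi[of "Complex X Y"] by auto
  have r2: "r\<^sup>2 = X\<^sup>2 + Y\<^sup>2" unfolding r_def c_def by (simp add: cmod_power2)
  define p where "p = X * cos phi + Y * sin phi"
  have sc: "(sin phi)\<^sup>2 + (cos phi)\<^sup>2 = 1" by simp
  have eq: "(X - cos phi)\<^sup>2 + (Y - sin phi)\<^sup>2 = r\<^sup>2 - 2*p + 1"
    unfolding r2 p_def using sc by (simp add: power2_eq_square algebra_simps)
  hence lt: "r\<^sup>2 < 2*p - 1/4" using assms by simp
  have "0 \<le> (2*p - 1/2)\<^sup>2" by simp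
  hence "r\<^sup>2 < (2*p)\<^sup>2" using lt by (simp add: power2_eq_square algebra_simps)
  moreover have "r \<ge> 0" unfolding r_def by simp
  moreover have p0: "p > 0" using lt zero_le_power2[of r] by linarith
  ultimately have "r < 2*p" by (smt (verit) power_mono)
  have "r * cos (A - phi) = p" unfolding cos_diff p_def rc[symmetric] by (simp add: algebra_simps)
  have "r > 0"
  proof (rule ccontr)
    assume "\<not> r > 0" hence "r = 0" using \<open>r \<ge> 0\<close> by simp
    hence "X = 0" "Y = 0" using rc by auto
    thus False using p0 unfolding p_def by simp
  qed
  have "cos (A - phi) > 1/2"
  proof -
    have "r * 1 < r * (2 * cos (A - phi))" using \<open>r * cos (A - phi) = p\<close> \<open>r < 2*p\<close> by simp
    hence "1 < 2 * cos (A - phi)" using \<open>r > 0\<close> mult_less_cancel_left_pos by blast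
    thus ?thesis by simp
  qed
  then obtain i where i: "\<bar>A - phi - 2*pi * of_int i\<bar> < pi/3" using cos_gt_half by blast
  define e where "e = (A - phi - 2*pi * of_int i) / (2*pi)"
  have "\<bar>e\<bar> < 1/6" unfolding e_def using i pi_gt_zero by (simp add: field_simps abs_divide)
  moreover have "A / (2*pi) = phi/(2*pi) + e + of_int i" unfolding e_def by (simp add: field_simps)
  ultimately show ?thesis unfolding A_def c_def by blast
qed

lemma tval_good:
  assumes N: "N > 0" and s: "s\<^sup>2 \<le> 3/32"
    and hx: "\<bar>real nx / N - (1 + cos phi)/2\<bar> < s" and hy: "\<bar>real ny / N - (1 + sin phi)/2\<bar> < s"
  shows "\<exists>e i. \<bar>e\<bar> < 1/6 \<and> tval N nx ny = phi/(2*pi) + e + of_int i"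
proof -
  define X where "X = 2 * real nx / real N - 1"
  define Y where "Y = 2 * real ny / real N - 1"
  have "\<bar>X - cos phi\<bar> < 2 * s"
  proof -
    have "X - cos phi = 2 * (real nx / N - (1 + cos phi)/2)" unfolding X_def by (simp add: field_simps)
    show ?thesis unfolding \<open>X - cos phi = _\<close> abs_mult using hx by simp
  qed
  moreover have "\<bar>Y - sin phi\<bar> < 2 * s"
  proof -
    have "Y - sin phi = 2 * (real ny / N - (1 + sin phi)/2)" unfolding Y_def by (simp add: field_simps)
    show ?thesis unfolding \<open>Y - sin phi = _\<close> abs_mult using hy by simp
  qed
  ultimately have "(X - cos phi)\<^sup>2 < (2 * s)\<^sup>2" "(Y - sin phi)\<^sup>2 < (2 * s)\<^sup>2"
    by (metis abs_ge_zero power2_abs power_strict_mono zero_less_numeral pos2)+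
  hence "(X - cos phi)\<^sup>2 + (Y - sin phi)\<^sup>2 < 3/4" using s by (simp add: power_mult_distrib)
  then obtain e i where ei: "\<bar>e\<bar> < 1/6" "Arg2pi (Complex X Y) / (2 * pi) = phi/(2 * pi) + e + of_int i"
    using Arg_close by blast
  have "tval N nx ny = Arg2pi (Complex X Y) / (2 * pi) - of_int \<lfloor>Arg2pi (Complex X Y) / (2 * pi)\<rfloor>"
    unfolding tval_def rmod_def atan2_def X_def Y_def by (simp add: field_simps)
  also have "\<dots> = phi/(2 * pi) + e + of_int (i - \<lfloor>Arg2pi (Complex X Y) / (2 * pi)\<rfloor>)"
    using ei by simp
  finally show ?thesis using ei by blast
qed



lemma exp_le_bad:
  fixes M :: "'a pmf" and g :: "'a \<Rightarrow> real"
  assumes g01: "\<And>\<omega>. 0 \<le> g \<omega> \<and> g \<omega> \<le> 1" and gB: "\<And>\<omega>. \<omega> \<notin> Bad \<Longrightarrow> g \<omega> \<le> B" and B: "B \<ge> 0"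
  shows "measure_pmf.expectation M g \<le> B + measure_pmf.prob M Bad"
proof -
  have ig: "integrable (measure_pmf M) g"
    by (rule measure_pmf.integrable_const_bound[where B=1]) (use g01 in auto)
  have ii: "integrable (measure_pmf M) (\<lambda>\<omega>. B + indicator Bad \<omega>)"
    by (rule measure_pmf.integrable_const_bound[where B="B+1"]) (use B in \<open>auto simp: indicator_def\<close>)
  have "measure_pmf.expectation M g \<le> measure_pmf.expectation M (\<lambda>\<omega>. B + indicator Bad \<omega>)"
  proof (rule integral_mono[OF ig ii])
    fix \<omega> show "g \<omega> \<le> B + indicator Bad \<omega>"
      using g01[of \<omega>] gB[of \<omega>] B by (cases "\<omega> \<in> Bad") auto
  qed
  also have "\<dots> = B + measure_pmf.prob M Bad"
  proof -
    have "measure_pmf.expectation M (\<lambda>\<omega>. B + indicator Bad \<omega>) =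
      measure_pmf.expectation M (\<lambda>_. B) + measure_pmf.expectation M (indicator Bad)"
      by (rule Bochner_Integration.integral_add) (auto intro: measure_pmf.integrable_const_bound[where B=1])
    also have "measure_pmf.expectation M (indicator Bad) = measure_pmf.prob M Bad"
      by simp
    finally show ?thesis by simp
  qed
  finally show ?thesis .
qed



lemma map_fst_comp: "map_pmf (\<lambda>\<omega>. fst \<omega> k) (pair_pmf A B) = map_pmf (\<lambda>f. f k) A"
proof -
  have "map_pmf (\<lambda>\<omega>. fst \<omega> k) (pair_pmf A B) = map_pmf (\<lambda>f. f k) (map_pmf fst (pair_pmf A B))"
    by (simp add: pmf.map_comp o_def)
  thus ?thesis by (simp only: map_fst_pair_pmf)
qed

lemma map_snd_comp: "map_pmf (\<lambda>\<omega>. snd \<omega> k) (pair_pmf A B) = map_pmf (\<lambda>f. f k) B"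
proof -
  have "map_pmf (\<lambda>\<omega>. snd \<omega> k) (pair_pmf A B) = map_pmf (\<lambda>f. f k) (map_pmf snd (pair_pmf A B))"
    by (simp add: pmf.map_comp o_def)
  thus ?thesis by (simp only: map_snd_pair_pmf)
qed

lemma marg_fst:
  assumes "k \<in> {1..l}"
  shows "measure_pmf.prob (counts_pmf l N \<theta>) {\<omega>. P (fst \<omega> k)} =
   measure_pmf.prob (binomial_pmf N ((1 + cos (2 * pi * 2 ^ (k - 1) * \<theta>)) / 2)) {x. P x}"
proof -
  have "measure_pmf.prob (counts_pmf l N \<theta>) {\<omega>. P (fst \<omega> k)} =
     measure_pmf.prob (map_pmf (\<lambda>\<omega>. fst \<omega> k) (counts_pmf l N \<theta>)) {x. P x}"
    by (simp add: measure_map_pmf)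
  also have "map_pmf (\<lambda>\<omega>. fst \<omega> k) (counts_pmf l N \<theta>) = binomial_pmf N ((1 + cos (2 * pi * 2 ^ (k - 1) * \<theta>)) / 2)"
    unfolding counts_pmf_def map_fst_comp Pi_pmf_component[OF finite_atLeastAtMost] using assms by simp
  finally show ?thesis .
qed

lemma marg_snd:
  assumes "k \<in> {1..l}"
  shows "measure_pmf.prob (counts_pmf l N \<theta>) {\<omega>. P (snd \<omega> k)} =
   measure_pmf.prob (binomial_pmf N ((1 + sin (2 * pi * 2 ^ (k - 1) * \<theta>)) / 2)) {x. P x}"
proof -
  have "measure_pmf.prob (counts_pmf l N \<theta>) {\<omega>. P (snd \<omega> k)} =
     measure_pmf.prob (map_pmf (\<lambda>\<omega>. snd \<omega> k) (counts_pmf l N \<theta>)) {x. P x}"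
    by (simp add: measure_map_pmf)
  also have "map_pmf (\<lambda>\<omega>. snd \<omega> k) (counts_pmf l N \<theta>) = binomial_pmf N ((1 + sin (2 * pi * 2 ^ (k - 1) * \<theta>)) / 2)"
    unfolding counts_pmf_def map_snd_comp Pi_pmf_component[OF finite_atLeastAtMost] using assms by simp
  finally show ?thesis .
qed


lemma hoeff:
  assumes "N > 0" "s \<ge> 0" "\<bar>c\<bar> \<le> 1"
  shows "measure_pmf.prob (binomial_pmf N ((1 + c) / 2)) {x. s \<le> \<bar>real x / real N - (1 + c) / 2\<bar>}
         \<le> 2 * exp (- 2 * real N * s\<^sup>2)"
proof -
  have "binomial_distribution ((1 + c) / 2)" unfolding binomial_distribution_def using assms by auto
  from binomial_distribution.prob_abs_ge'[OF this assms(1,2)] show ?thesis by simp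
qed



lemma main_exp:
  assumes l: "l \<ge> 1" and N: "N > 0"
  shows "1 - measure_pmf.expectation (counts_pmf l N \<theta>)
           (\<lambda>(Nx, Ny). fidelity (Umat (theta_hat l N Nx Ny)) (Umat \<theta>))
         \<le> pi\<^sup>2 / (9 * 4^l) + 4 * real l * exp (- 3 * real N / 16)"
proof -
  define M where "M = counts_pmf l N \<theta>"
  define F where "F = (\<lambda>(Nx, Ny). fidelity (Umat (theta_hat l N Nx Ny)) (Umat \<theta>))"
  define g where "g = (\<lambda>\<omega>. 1 - F \<omega>)"
  define s :: real where "s = sqrt (3/32)"
  have s0: "s \<ge> 0" and s2: "s\<^sup>2 = 3/32" unfolding s_def by auto
  define phi where "phi = (\<lambda>k::nat. 2 * pi * 2 ^ (k - 1) * \<theta>)"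
  define Ax where "Ax = (\<lambda>k. {\<omega>::(nat\<Rightarrow>nat)\<times>(nat\<Rightarrow>nat). s \<le> \<bar>real (fst \<omega> k) / real N - (1 + cos (phi k)) / 2\<bar>})"
  define Ay where "Ay = (\<lambda>k. {\<omega>::(nat\<Rightarrow>nat)\<times>(nat\<Rightarrow>nat). s \<le> \<bar>real (snd \<omega> k) / real N - (1 + sin (phi k)) / 2\<bar>})"
  define Bad where "Bad = (\<Union>k\<in>{1..l}. Ax k \<union> Ay k)"
  have F01: "0 \<le> F \<omega> \<and> F \<omega> \<le> 1" for \<omega>
  proof -
    obtain a b where "\<omega> = (a, b)" by force
    hence "F \<omega> = (cos (pi * (\<theta> - theta_hat l N a b)))\<^sup>2" unfolding F_def by (simp add: fidelity_Umat)
    thus ?thesis by (simp add: abs_square_le_1)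
  qed
  have g01: "0 \<le> g \<omega> \<and> g \<omega> \<le> 1" for \<omega> unfolding g_def using F01[of \<omega>] by auto
  have gB: "g \<omega> \<le> pi\<^sup>2 / (9 * 4^l)" if nb: "\<omega> \<notin> Bad" for \<omega>
  proof -
    have "\<exists>e i. \<bar>e\<bar> < 1/6 \<and> tval N (fst \<omega> k) (snd \<omega> k) = 2^(k-1)*\<theta> + e + of_int i"
      if k: "1 \<le> k" "k \<le> l" for k
    proof -
      have "\<omega> \<notin> Ax k" "\<omega> \<notin> Ay k" using nb k unfolding Bad_def by auto
      hence hx: "\<bar>real (fst \<omega> k) / real N - (1 + cos (phi k)) / 2\<bar> < s"
        and hy: "\<bar>real (snd \<omega> k) / real N - (1 + sin (phi k)) / 2\<bar> < s"
        unfolding Ax_def Ay_def by auto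
      from tval_good[OF N _ hx hy] s2 obtain e i where
        "\<bar>e\<bar> < 1/6" "tval N (fst \<omega> k) (snd \<omega> k) = phi k / (2 * pi) + e + of_int i" by auto
      moreover have "phi k / (2 * pi) = 2^(k-1)*\<theta>" unfolding phi_def by simp
      ultimately show ?thesis by auto
    qed
    from theta_hat_good[OF l this] have
      "1 - fidelity (Umat (theta_hat l N (fst \<omega>) (snd \<omega>))) (Umat \<theta>) \<le> pi\<^sup>2 / (9 * 4^l)" by blast
    thus ?thesis unfolding g_def F_def by (simp add: case_prod_beta)
  qed
  have "measure_pmf.expectation M g \<le> pi\<^sup>2 / (9 * 4^l) + measure_pmf.prob M Bad"
    by (rule exp_le_bad[OF g01 gB]) auto
  moreover have "measure_pmf.expectation M g = 1 - measure_pmf.expectation M F"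
  proof -
    have "measure_pmf.expectation M g = measure_pmf.expectation M (\<lambda>_. 1) - measure_pmf.expectation M F"
      unfolding g_def
      by (rule Bochner_Integration.integral_diff)
         (auto intro!: measure_pmf.integrable_const_bound[where B=1] simp: F01)
    thus ?thesis by simp
  qed
  moreover have "measure_pmf.prob M Bad \<le> 4 * real l * exp (- 3 * real N / 16)"
  proof -
    have "measure_pmf.prob M Bad \<le> (\<Sum>k\<in>{1..l}. measure_pmf.prob M (Ax k \<union> Ay k))"
      unfolding Bad_def by (rule measure_UNION_le) auto
    also have "\<dots> \<le> (\<Sum>k\<in>{1..l}. 4 * exp (- 3 * real N / 16))"
    proof (rule sum_mono)
      fix k assume k: "k \<in> {1..l}"
      have "measure_pmf.prob M (Ax k \<union> Ay k) \<le> measure_pmf.prob M (Ax k) + measure_pmf.prob M (Ay k)"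
        by (rule measure_Un_le) auto
      also have "measure_pmf.prob M (Ax k) \<le> 2 * exp (- 2 * real N * s\<^sup>2)"
      proof -
        have "measure_pmf.prob M (Ax k) = measure_pmf.prob (binomial_pmf N ((1 + cos (phi k)) / 2))
              {x. s \<le> \<bar>real x / real N - (1 + cos (phi k)) / 2\<bar>}"
          unfolding M_def Ax_def phi_def
          by (rule marg_fst[OF k, where P="\<lambda>x. s \<le> \<bar>real x / real N - (1 + cos (2 * pi * 2 ^ (k - 1) * \<theta>)) / 2\<bar>"])
        also have "\<dots> \<le> 2 * exp (- 2 * real N * s\<^sup>2)" by (rule hoeff) (use N s0 in auto)
        finally show ?thesis .
      qed
      also have "measure_pmf.prob M (Ay k) \<le> 2 * exp (- 2 * real N * s\<^sup>2)"
      proof -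
        have "measure_pmf.prob M (Ay k) = measure_pmf.prob (binomial_pmf N ((1 + sin (phi k)) / 2))
              {x. s \<le> \<bar>real x / real N - (1 + sin (phi k)) / 2\<bar>}"
          unfolding M_def Ay_def phi_def
          by (rule marg_snd[OF k, where P="\<lambda>x. s \<le> \<bar>real x / real N - (1 + sin (2 * pi * 2 ^ (k - 1) * \<theta>)) / 2\<bar>"])
        also have "\<dots> \<le> 2 * exp (- 2 * real N * s\<^sup>2)" by (rule hoeff) (use N s0 in auto)
        finally show ?thesis .
      qed
      also have "- 2 * real N * s\<^sup>2 = - 3 * real N / 16" unfolding s2 by simp
      finally show "measure_pmf.prob M (Ax k \<union> Ay k) \<le> 4 * exp (- 3 * real N / 16)" by simp
    qed
    also have "\<dots> = 4 * real l * exp (- 3 * real N / 16)" by simp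
    finally show ?thesis .
  qed
  ultimately show ?thesis unfolding M_def F_def by linarith
qed



lemma arith_bound:
  assumes l: "l \<ge> 1"
  shows "pi\<^sup>2 / (9 * 4^l) + 4 * real l * exp (- 3 * real (Nmeas l) / 16)
     \<le> 60000 * (ln (real (nuses l)) / real (nuses l))\<^sup>2"
proof -
  define N where "N = Nmeas l"
  define Mv :: real where "Mv = 4 * real l * 2 ^ (2 * l)"
  have Mv_pos: "Mv \<ge> 4" unfolding Mv_def using l
    by (smt (verit) mult_le_cancel_left1 of_nat_1 of_nat_le_iff one_le_power)
  have lnM0: "ln Mv \<ge> 0" using Mv_pos by simp
  define c where "c = (534/100) * ln Mv"
  have c0: "c \<ge> 0" unfolding c_def using lnM0 by simp
  have Neq: "real N = of_int \<lceil>c\<rceil>" unfolding N_def Nmeas_def c_def Mv_def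
    using c0 unfolding c_def Mv_def by (simp add: of_nat_nat)
  have Nge: "real N \<ge> (534/100) * ln Mv" unfolding Neq c_def[symmetric] by (rule le_of_int_ceiling)
  have Nle: "real N \<le> (534/100) * ln Mv + 1" unfolding Neq c_def[symmetric] by (rule of_int_ceiling_le_add_one)
  have "ln Mv \<le> 6 * real l"
  proof -
    have "ln Mv = ln (4 * real l) + ln (2 ^ (2 * l))" unfolding Mv_def using l by (simp add: ln_mult)
    also have "ln (2 ^ (2 * l)) = real (2 * l) * ln 2" by (simp add: ln_realpow)
    also have "ln (4 * real l) \<le> 4 * real l" using ln_le_minus_one[of "4 * real l"] l by simp
    also have "ln (2::real) \<le> 1" using ln_le_minus_one[of 2] by simp
    finally show ?thesis by (simp add: mult_left_mono)
  qed
  hence Nle2: "real N \<le> 35 * real l" using Nle l by simp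
  have N1: "real N \<ge> 1"
  proof -
    have "ln Mv \<ge> ln 4" using Mv_pos by simp
    moreover have "ln (4::real) \<ge> 2/3" proof -
      have "ln (2::real) \<le> ln 4" by simp
      thus ?thesis using ln2_ge_two_thirds by linarith
    qed
    ultimately show ?thesis using Nge by simp
  qed
  have "exp (- 3 * real N / 16) \<le> exp (- ln Mv)" using Nge lnM0 by simp
  also have "\<dots> = 1 / Mv" using Mv_pos by (simp add: exp_minus inverse_eq_divide)
  finally have "4 * real l * exp (- 3 * real N / 16) \<le> 4 * real l * (1 / Mv)"
    using l by (intro mult_left_mono) auto
  also have "4 * real l * (1 / Mv) = 1 / 4^l" unfolding Mv_def using l by (simp add: power_mult)
  finally have e1: "4 * real l * exp (- 3 * real N / 16) \<le> 1 / 4^l" .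
  have "pi\<^sup>2 \<le> 4\<^sup>2" using pi_less_4 by (intro power_mono) auto
  hence "pi\<^sup>2 / 9 \<le> 2" by simp
  hence "(pi\<^sup>2 / 9) / 4^l \<le> 2 / 4^l" by (intro divide_right_mono) auto
  hence e2: "pi\<^sup>2 / (9 * 4^l) \<le> 2 / 4^l" by simp
  have up: "pi\<^sup>2 / (9 * 4^l) + 4 * real l * exp (- 3 * real N / 16) \<le> 3 / 4^l" using e1 e2 by simp
  define n where "n = nuses l"
  have p4: "(2::real)^(l*2) = 4^l" by (simp add: mult.commute[of l] power_mult)
  have p2: "(2::real)^l \<ge> 2" using l by (metis power_one_right power_increasing one_le_numeral)
  have rn: "real n = 2 * real N * (2^l - 1)" unfolding n_def nuses_def N_def
    using p2 by (simp add: of_nat_diff)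
  have "2 * 1 * (2^l - 1) \<le> 2 * real N * (2^l - 1)"
    using N1 p2 by (intro mult_right_mono mult_left_mono) auto
  hence nlo: "real n \<ge> 2^l" unfolding rn using p2 by simp
  have "2 * real N * (2^l - 1) \<le> 2 * (35 * real l) * 2^l"
    using Nle2 N1 p2 by (intro mult_mono) auto
  hence nhi: "real n \<le> 70 * real l * 2^l" unfolding rn by simp
  have npos: "real n > 0" using nlo p2 by linarith
  have "ln (real n) \<ge> ln (2^l)" using nlo npos by (subst ln_le_cancel_iff) auto
  hence h1: "ln (real n) \<ge> real l * ln 2" by (simp add: ln_realpow)
  have "real l * (2/3) \<le> real l * ln 2" using ln2_ge_two_thirds by (intro mult_left_mono) auto
  hence lnn: "ln (real n) \<ge> real l * (2/3)" using h1 by linarith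
  have "1 / (140 * 2^l) \<le> (real l * (2/3)) / (70 * real l * 2^l)" using l by (simp add: field_simps)
  also have "\<dots> \<le> ln (real n) / real n"
    by (rule frac_le) (use lnn nhi npos l in auto)
  finally have q: "1 / (140 * 2^l) \<le> ln (real n) / real n" .
  have "(1 / (140 * (2::real)^l))\<^sup>2 \<le> (ln (real n) / real n)\<^sup>2"
    by (rule power_mono[OF q]) simp
  hence "60000 * (1 / (140 * (2::real)^l))\<^sup>2 \<le> 60000 * (ln (real n) / real n)\<^sup>2" by simp
  moreover have "3 / (4::real)^l \<le> 60000 * (1 / (140 * (2::real)^l))\<^sup>2"
    by (simp add: power_divide power_mult_distrib divide_simps p4 flip: power_mult)
  ultimately show ?thesis using up unfolding N_def n_def by linarith
qed


lemma Nmeas_pos: assumes l: "l \<ge> 1" shows "Nmeas l > 0"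
proof -
  have "4 * real l * 2 ^ (2 * l) \<ge> 4 * 1 * 1" using l
    by (intro mult_mono) auto
  hence "ln (4 * real l * 2 ^ (2 * l)) > 0" by simp
  hence "(534 / 100) * ln (4 * real l * 2 ^ (2 * l)) > 0" by simp
  hence "\<lceil>(534 / 100) * ln (4 * real l * 2 ^ (2 * l))\<rceil> > 0" by linarith
  thus ?thesis unfolding Nmeas_def by simp
qed

theorem mainTheorem5:
  "\<exists>C>0. \<forall>l::nat. l \<ge> 1 \<longrightarrow> (\<forall>\<theta>::real. 0 \<le> \<theta> \<and> \<theta> < 1 \<longrightarrow>
     1 - measure_pmf.expectation (counts_pmf l (Nmeas l) \<theta>)
           (\<lambda>(Nx, Ny). fidelity (Umat (theta_hat l (Nmeas l) Nx Ny)) (Umat \<theta>))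
     \<le> C * (ln (real (nuses l)) / real (nuses l))\<^sup>2)"
proof (intro exI[of _ 60000] conjI allI impI)
  fix l :: nat and \<theta> :: real
  assume l: "l \<ge> 1"
  show "1 - measure_pmf.expectation (counts_pmf l (Nmeas l) \<theta>)
           (\<lambda>(Nx, Ny). fidelity (Umat (theta_hat l (Nmeas l) Nx Ny)) (Umat \<theta>))
     \<le> 60000 * (ln (real (nuses l)) / real (nuses l))\<^sup>2"
    using main_exp[OF l Nmeas_pos[OF l], of \<theta>] arith_bound[OF l] by linarith
qed simp

end
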